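(* Let $X$ be a non-empty recognizable subset of $Z^*$. Then for every integer $p > 0$ there exists $\sigma \in X$ with $|\sigma| > p$.
   Context: $Z^*$ is the commutative group of finite sequences of integers whose last entry is non-zero (including the empty sequence), with pointwise addition (shorter sequence padded by zeros) and the empty sequence as unit; equivalently the free abelian group on countably many generators, isomorphic to $(\mathbb{Q}_{>0},\times,1)$ via exponents of prime factorizations. For $\sigma\in Z^*$, $|\sigma|$ is its length, i.e. the smallest $n_0$ such that $\sigma(n)=0$ for all $n>n_0$. A subset $S$ of a monoid $M$ is recognizable if there exist a finite monoid $N$, a monoid morphism $\varphi\colon M \to N$ and a subset $T \subseteq N$ with $S = \varphi^{-1}(T)$. *)

theory Defs
  imports "HOL-Algebra.Group"
begin

text \<open>Elements of Z* are represented as integer lists whose last entry is non-zero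
  (the empty list included). Entry i of a list, padded by zeros:\<close>

definition zentry :: "int list \<Rightarrow> nat \<Rightarrow> int" where
  "zentry xs i = (if i < length xs then xs ! i else 0)"

definition strip_zeros :: "int list \<Rightarrow> int list" where
  "strip_zeros xs = rev (dropWhile (\<lambda>x. x = 0) (rev xs))"

definition zadd :: "int list \<Rightarrow> int list \<Rightarrow> int list" where
  "zadd xs ys = strip_zeros (map (\<lambda>i. zentry xs i + zentry ys i) [0..<max (length xs) (length ys)])"

definition Zstar :: "int list monoid" where
  "Zstar = \<lparr>carrier = {xs. xs = [] \<or> last xs \<noteq> 0}, mult = zadd, one = []\<rparr>"

text \<open>Recognizable subsets of a monoid M, with the finite monoid N ranging over
  monoids whose elements lie in type 'b (the theorem is stated for arbitrary 'b).\<close>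
definition recognizable :: "'b itself \<Rightarrow> ('a, 'm) monoid_scheme \<Rightarrow> 'a set \<Rightarrow> bool" where
  "recognizable _ M S \<longleftrightarrow>
     (\<exists>(N :: 'b monoid) (\<phi> :: 'a \<Rightarrow> 'b) T.
        monoid N \<and> finite (carrier N) \<and>
        \<phi> \<in> hom M N \<and> \<phi> \<one>\<^bsub>M\<^esub> = \<one>\<^bsub>N\<^esub> \<and>
        T \<subseteq> carrier N \<and> S = {x \<in> carrier M. \<phi> x \<in> T})"

end

theory Submission
  imports Defs
begin

lemma zentry_snoc0: "zentry (ys @ [0]) i = zentry ys i"
  by (auto simp: zentry_def nth_append)

lemma zentry_strip: "zentry (strip_zeros xs) i = zentry xs i"
proof (induction xs rule: rev_induct)
  case Nil
  then show ?case by (simp add: strip_zeros_def)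
next
  case (snoc x ys)
  show ?case
  proof (cases "x = 0")
    case True
    then have "strip_zeros (ys @ [x]) = strip_zeros ys" by (simp add: strip_zeros_def)
    then show ?thesis using snoc True zentry_snoc0 by simp
  next
    case False
    then have "strip_zeros (ys @ [x]) = ys @ [x]" by (simp add: strip_zeros_def)
    then show ?thesis by simp
  qed
qed

lemma strip_carrier: "strip_zeros xs \<in> carrier Zstar"
proof (induction xs rule: rev_induct)
  case Nil
  then show ?case by (simp add: strip_zeros_def Zstar_def)
next
  case (snoc x ys)
  show ?case
  proof (cases "x = 0")
    case True
    then have "strip_zeros (ys @ [x]) = strip_zeros ys" by (simp add: strip_zeros_def)
    then show ?thesis using snoc by simp
  next
    case False
    then have "strip_zeros (ys @ [x]) = ys @ [x]" by (simp add: strip_zeros_def)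
    then show ?thesis using False by (simp add: Zstar_def)
  qed
qed

lemma zentry_beyond: "length a \<le> i \<Longrightarrow> zentry a i = 0"
  by (simp add: zentry_def)

lemma zentry_last: "a \<in> carrier Zstar \<Longrightarrow> a \<noteq> [] \<Longrightarrow> zentry a (length a - 1) \<noteq> 0"
  by (auto simp: zentry_def Zstar_def last_conv_nth)

lemma zlen_eq:
  assumes "a \<in> carrier Zstar" "b \<in> carrier Zstar" "\<And>i. zentry a i = zentry b i"
  shows "length a = length b"
proof (rule ccontr)
  assume ne: "length a \<noteq> length b"
  show False
  proof (cases "length a < length b")
    case True
    then have "b \<noteq> []" by auto
    then have "zentry b (length b - 1) \<noteq> 0" using zentry_last assms(2) by blast
    moreover have "zentry a (length b - 1) = 0" using True by (intro zentry_beyond) simp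
    ultimately show False using assms(3) by simp
  next
    case False
    then have lt: "length b < length a" using ne by simp
    then have "a \<noteq> []" by auto
    then have "zentry a (length a - 1) \<noteq> 0" using zentry_last assms(1) by blast
    moreover have "zentry b (length a - 1) = 0" using lt by (intro zentry_beyond) simp
    ultimately show False using assms(3) by simp
  qed
qed

lemma zext:
  assumes "a \<in> carrier Zstar" "b \<in> carrier Zstar" "\<And>i. zentry a i = zentry b i"
  shows "a = b"
proof (rule nth_equalityI)
  show l: "length a = length b" using zlen_eq assms by blast
  fix i assume "i < length a"
  then show "a ! i = b ! i" using assms(3)[of i] l by (simp add: zentry_def)
qed

lemma zentry_zadd: "zentry (zadd a b) i = zentry a i + zentry b i"
  unfolding zadd_def zentry_strip
  by (auto simp: zentry_def[of "map _ _"] zentry_beyond)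

definition mk :: "(nat \<Rightarrow> int) \<Rightarrow> nat \<Rightarrow> int list" where
  "mk f n = strip_zeros (map f [0..<n])"

lemma zentry_mk: "zentry (mk f n) i = (if i < n then f i else 0)"
  unfolding mk_def zentry_strip by (simp add: zentry_def)

lemma mk_carrier: "mk f n \<in> carrier Zstar"
  unfolding mk_def by (rule strip_carrier)

lemma zadd_carrier: "zadd a b \<in> carrier Zstar"
  unfolding zadd_def by (rule strip_carrier)

theorem proposition7:
  fixes X :: "int list set"
  assumes "X \<subseteq> carrier Zstar"
    and "X \<noteq> {}"
    and "recognizable TYPE('b) Zstar X"
  shows "\<forall>p::nat. p > 0 \<longrightarrow> (\<exists>\<sigma>\<in>X. length \<sigma> > p)"
proof (intro allI impI)
  fix p :: nat assume "p > 0"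
  obtain \<sigma> where s: "\<sigma> \<in> X" using assms(2) by blast
  have sc: "\<sigma> \<in> carrier Zstar" using s assms(1) by blast
  obtain N :: "'b monoid" and \<phi> T where N: "monoid N" "finite (carrier N)"
    and hom: "\<phi> \<in> hom Zstar N" and T: "X = {x \<in> carrier Zstar. \<phi> x \<in> T}"
    using assms(3) unfolding recognizable_def by blast
  have hm: "\<And>x y. x \<in> carrier Zstar \<Longrightarrow> y \<in> carrier Zstar \<Longrightarrow> \<phi> (zadd x y) = \<phi> x \<otimes>\<^bsub>N\<^esub> \<phi> y"
  proof -
    fix x y assume "x \<in> carrier Zstar" "y \<in> carrier Zstar"
    moreover have "\<forall>x\<in>carrier Zstar. \<forall>y\<in>carrier Zstar. \<phi> (x \<otimes>\<^bsub>Zstar\<^esub> y) = \<phi> x \<otimes>\<^bsub>N\<^esub> \<phi> y"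
      using hom unfolding hom_def by blast
    moreover have "x \<otimes>\<^bsub>Zstar\<^esub> y = zadd x y" by (simp add: Zstar_def)
    ultimately show "\<phi> (zadd x y) = \<phi> x \<otimes>\<^bsub>N\<^esub> \<phi> y" by metis
  qed
  define L where "L = max (length \<sigma>) (p+1)"
  define w where "w k = mk (\<lambda>i. zentry \<sigma> i + (if i = p then k else 0)) L" for k :: int
  define u where "u k = mk (\<lambda>i. if i = p then k else 0) (p+1)" for k :: int
  have wu: "zadd (w a) (u b) = w (a + b)" for a b
    by (rule zext) (auto simp: zadd_carrier w_def mk_carrier zentry_zadd zentry_mk u_def L_def zentry_beyond)
  have uu: "zadd (u a) (u b) = u (a + b)" for a b
    by (rule zext) (auto simp: zadd_carrier mk_carrier zentry_zadd zentry_mk u_def)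
  have w0: "w 0 = \<sigma>"
    by (rule zext) (auto simp: sc w_def mk_carrier zentry_mk L_def zentry_beyond)
  have "\<not> inj (\<lambda>k::nat. \<phi> (u (int k)))"
  proof
    assume "inj (\<lambda>k::nat. \<phi> (u (int k)))"
    moreover have "range (\<lambda>k::nat. \<phi> (u (int k))) \<subseteq> carrier N"
      using hom mk_carrier unfolding hom_def u_def by auto
    ultimately have "finite (UNIV :: nat set)"
      using N(2) by (meson finite_imageD finite_subset)
    then show False by simp
  qed
  then obtain k1 k2 :: nat where k: "k1 \<noteq> k2" "\<phi> (u (int k1)) = \<phi> (u (int k2))"
    unfolding inj_def by blast
  obtain a b :: nat where ab: "a < b" "\<phi> (u (int a)) = \<phi> (u (int b))"
    using k by (metis linorder_neqE_nat)
  define d where "d = int b - int a"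
  have dpos: "d > 0" using ab d_def by simp
  have per: "\<phi> (w (c + d)) = \<phi> (w c)" for c
  proof -
    have "\<phi> (w (c + d)) = \<phi> (zadd (w (c - int a)) (u (int b)))"
    proof -
      have e: "c + d = c - int a + int b" using d_def by simp
      show ?thesis unfolding e using wu[of "c - int a" "int b"] by simp
    qed
    also have "\<dots> = \<phi> (w (c - int a)) \<otimes>\<^bsub>N\<^esub> \<phi> (u (int b))"
      by (simp add: hm w_def u_def mk_carrier)
    also have "\<dots> = \<phi> (w (c - int a)) \<otimes>\<^bsub>N\<^esub> \<phi> (u (int a))" using ab by simp
    also have "\<dots> = \<phi> (zadd (w (c - int a)) (u (int a)))"
      by (simp add: hm w_def u_def mk_carrier)
    also have "\<dots> = \<phi> (w c)" using wu by simp
    finally show ?thesis .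
  qed
  have p1: "\<phi> (w d) = \<phi> \<sigma>" using per[of 0] w0 by simp
  have p2: "\<phi> (w (d + d)) = \<phi> \<sigma>" using per[of d] p1 by simp
  have inX: "w c \<in> X" if "\<phi> (w c) = \<phi> \<sigma>" for c
    using that s T by (auto simp: w_def mk_carrier)
  have ew: "zentry (w c) p = zentry \<sigma> p + c" for c
    by (simp add: w_def zentry_mk L_def max_def)
  have len: "length (w c) > p" if "zentry \<sigma> p + c \<noteq> 0" for c
    using that ew[of c] zentry_beyond[of "w c" p] by linarith
  show "\<exists>\<sigma>\<in>X. length \<sigma> > p"
  proof (cases "zentry \<sigma> p + d = 0")
    case True
    then have "zentry \<sigma> p + (d + d) \<noteq> 0" using dpos by simp
    then show ?thesis using len inX p2 by blast
  next
    case False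
    then show ?thesis using len inX p1 by blast
  qed
qed

end
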